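(* Let $U=\mathbb{C}^m$, $V=\mathbb{C}^2$, $W=\mathbb{C}^2$ with bases $\{u_i\}$, $\{v_j\}$, $\{w_k\}$ and dual bases $\{u^i\}$, $\{v^j\}$, $\{w^k\}$, and set $x^i_j=u^i\otimes v_j\in U^*\otimes V$, $y^j_k=v^j\otimes w_k\in V^*\otimes W$, $z^k_i=w^k\otimes u_i\in W^*\otimes U$. Let $$M_{\langle m,2,2\rangle}=\sum_{k=1}^{2}\sum_{j=1}^{2}\sum_{i=1}^{m} x^i_j\otimes y^j_k\otimes z^k_i$$ and $$T_{BCLRS,m}=M_{\langle m,2,2\rangle}-x^1_1\otimes(y^1_1\otimes z^1_1+y^1_2\otimes z^2_1)\in A\otimes B\otimes C,$$ where $A\subset U^*\otimes V$ is the $(2m-1)$-dimensional span of all $x^i_j$ with $(i,j)\neq(1,1)$, $B=V^*\otimes W\cong\mathbb{C}^4$ and $C=W^*\otimes U\cong\mathbb{C}^{2m}$. Then the border rank of $T_{BCLRS,2}$ equals $5$, and for every $m>2$ the border rank of $T_{BCLRS,m}$ is at least $3m-2$.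
   Context: A tensor in $A\otimes B\otimes C$ has rank one if it is of the form $a\otimes b\otimes c$ with $a,b,c$ nonzero. The border rank of a tensor $T$ is the smallest $r$ such that $T$ is a limit of tensors that are sums of at most $r$ rank one tensors. *)

theory Defs
  imports Complex_Main
begin

text \<open>Tensors in A (x) B (x) C are represented in coordinates: a tensor is a function
  giving the coefficient of each basis element (a,b,c), where basis indices of A, B, C
  range over finite carrier sets IA, IB, IC (coefficients outside are zero).\<close>

definition supported_in :: "'a set \<Rightarrow> ('a \<Rightarrow> complex) \<Rightarrow> bool" where
  "supported_in I v \<longleftrightarrow> (\<forall>x. x \<notin> I \<longrightarrow> v x = 0)"

definition tprod :: "('a \<Rightarrow> complex) \<Rightarrow> ('b \<Rightarrow> complex) \<Rightarrow> ('c \<Rightarrow> complex)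
    \<Rightarrow> ('a \<Rightarrow> 'b \<Rightarrow> 'c \<Rightarrow> complex)" where
  "tprod a b c = (\<lambda>x y z. a x * b y * c z)"

definition rank_one :: "'a set \<Rightarrow> 'b set \<Rightarrow> 'c set \<Rightarrow> ('a \<Rightarrow> 'b \<Rightarrow> 'c \<Rightarrow> complex) \<Rightarrow> bool" where
  "rank_one IA IB IC t \<longleftrightarrow>
     (\<exists>a b c. supported_in IA a \<and> supported_in IB b \<and> supported_in IC c \<and>
              a \<noteq> (\<lambda>_. 0) \<and> b \<noteq> (\<lambda>_. 0) \<and> c \<noteq> (\<lambda>_. 0) \<and> t = tprod a b c)"

definition sum_rank_le :: "'a set \<Rightarrow> 'b set \<Rightarrow> 'c set \<Rightarrow> nat \<Rightarrow> ('a \<Rightarrow> 'b \<Rightarrow> 'c \<Rightarrow> complex) \<Rightarrow> bool" where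
  "sum_rank_le IA IB IC r T \<longleftrightarrow>
     (\<exists>k ts. k \<le> r \<and> (\<forall>i<k. rank_one IA IB IC (ts i)) \<and>
             T = (\<lambda>x y z. \<Sum>i<k. ts i x y z))"

text \<open>Border rank: least r such that T is a limit (in the Euclidean topology of the
  finite-dimensional space, i.e. coordinatewise) of sums of at most r rank one tensors.\<close>
definition border_rank :: "'a set \<Rightarrow> 'b set \<Rightarrow> 'c set \<Rightarrow> ('a \<Rightarrow> 'b \<Rightarrow> 'c \<Rightarrow> complex) \<Rightarrow> nat" where
  "border_rank IA IB IC T = (LEAST r. \<exists>S :: nat \<Rightarrow> ('a \<Rightarrow> 'b \<Rightarrow> 'c \<Rightarrow> complex).
      (\<forall>n. sum_rank_le IA IB IC r (S n)) \<and>
      (\<forall>x y z. (\<lambda>n. S n x y z) \<longlonglongrightarrow> T x y z))"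

text \<open>Basis vectors; indices are 0-based. x^i_j = u^i (x) v_j is indexed by (i,j),
  y^j_k = v^j (x) w_k by (j,k), z^k_i = w^k (x) u_i by (k,i).\<close>
definition bvec :: "'a \<Rightarrow> 'a \<Rightarrow> complex" where
  "bvec p = (\<lambda>q. if q = p then 1 else 0)"

text \<open>A = span of x^i_j with (i,j) \<noteq> (1,1) (0-based: (0,0)).\<close>
definition IA :: "nat \<Rightarrow> (nat \<times> nat) set" where
  "IA m = {(i, j). i < m \<and> j < 2} - {(0, 0)}"

definition IB :: "(nat \<times> nat) set" where
  "IB = {(j, k). j < 2 \<and> k < 2}"

definition IC :: "nat \<Rightarrow> (nat \<times> nat) set" where
  "IC m = {(k, i). k < 2 \<and> i < m}"

definition matmult_tensor :: "nat \<Rightarrow> (nat \<times> nat) \<Rightarrow> (nat \<times> nat) \<Rightarrow> (nat \<times> nat) \<Rightarrow> complex" where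
  "matmult_tensor m = (\<lambda>x y z. \<Sum>k<2. \<Sum>j<2. \<Sum>i<m.
       tprod (bvec (i, j)) (bvec (j, k)) (bvec (k, i)) x y z)"

definition T_BCLRS :: "nat \<Rightarrow> (nat \<times> nat) \<Rightarrow> (nat \<times> nat) \<Rightarrow> (nat \<times> nat) \<Rightarrow> complex" where
  "T_BCLRS m = (\<lambda>x y z. matmult_tensor m x y z
       - (tprod (bvec (0, 0)) (bvec (0, 0)) (bvec (0, 0)) x y z
          + tprod (bvec (0, 0)) (bvec (0, 1)) (bvec (1, 0)) x y z))"

end

theory Submission
  imports Defs "Jordan_Normal_Form.Determinant"
begin


lemma tprod_bvec: "tprod (bvec a) (bvec b) (bvec c) x y z = (if x = a \<and> y = b \<and> z = c then 1 else 0)"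
  by (simp add: tprod_def bvec_def)

lemma sum_delta_c: "(\<Sum>i<(m::nat). if x = i then (c::complex) else 0) = (if x < m then c else 0)"
  by (induct m) auto

lemma sum_delta_nat: "(\<Sum>i<(m::nat). if x = i \<and> Q i then (1::complex) else 0) = (if x < m \<and> Q x then 1 else 0)"
proof -
  have "(\<Sum>i<m. if x = i \<and> Q i then (1::complex) else 0) = (\<Sum>i<m. if x = i then (if Q x then 1 else 0) else 0)"
    by (rule sum.cong) auto
  also have "\<dots> = (if x < m \<and> Q x then 1 else 0)"
    by (simp add: sum_delta_c)
  finally show ?thesis .
qed

lemma T_val: assumes "m \<ge> 1" shows "T_BCLRS m (x1,x2) (y1,y2) (z1,z2) =
  (if x1 < m \<and> x2 < 2 \<and> y1 = x2 \<and> y2 < 2 \<and> z1 = y2 \<and> z2 = x1 \<and> (x1,x2) \<noteq> (0,0) then 1 else 0)"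
proof -
  have e: "\<And>i j k. tprod (bvec (i, j)) (bvec (j, k)) (bvec (k, i)) (x1,x2) (y1,y2) (z1,z2)
     = (if x1 = i \<and> (x2 = j \<and> y1 = j \<and> y2 = k \<and> z1 = k \<and> z2 = i) then 1 else 0)"
    by (auto simp: tprod_bvec)
  have m: "matmult_tensor m (x1,x2) (y1,y2) (z1,z2) = (\<Sum>k<2. \<Sum>j<2. if x1 < m \<and> (x2 = j \<and> y1 = j \<and> y2 = k \<and> z1 = k \<and> z2 = x1) then 1 else 0)"
    unfolding matmult_tensor_def e sum_delta_nat ..
  show ?thesis using assms
    unfolding T_BCLRS_def m tprod_bvec
    by (auto simp: eval_nat_numeral lessThan_Suc)
qed


definition "vA e = (\<lambda>q. (1/e) * (bvec (0::nat,1::nat) q + e * bvec (1,1) q))"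
definition "vB e = (\<lambda>q. (1/e) * bvec (0::nat,1::nat) q)"
definition "vC e = (\<lambda>q. (1/e) * bvec (1::nat,0::nat) q)"
definition "vD e = (\<lambda>q. (1/e) * (bvec (1::nat,0::nat) q - e * bvec (1,1) q))"
definition "vE e = (\<lambda>q. - (1/e) * (bvec (0::nat,1::nat) q + bvec (1,0) q))"
definition "xC = (\<lambda>q. bvec (0::nat,1::nat) q - bvec (1,1) q)"
definition "yB = (\<lambda>q. bvec (1::nat,0::nat) q + bvec (1,1) q)"

definition "Sup5 e = (\<lambda>x y z.
   tprod (vA e) (bvec (1,0)) (\<lambda>q. xC q + e * bvec (0,0) q) x y z
 + tprod (vB e) (bvec (1,1)) (\<lambda>q. xC q + e * bvec (1,0) q) x y z
 + tprod (vC e) (\<lambda>q. yB q + e * bvec (0,0) q) (bvec (0,1)) x y z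
 + tprod (vD e) (\<lambda>q. yB q - e * bvec (0,1) q) (\<lambda>q. - bvec (1,1) q) x y z
 + tprod (vE e) yB xC x y z)"

definition "Rr = (\<lambda>x y z. tprod (bvec (1::nat,1::nat)) (bvec (1::nat,0::nat)) (bvec (0::nat,0::nat)) x y z
     - tprod (bvec (1,1)) (bvec (0,1)) (bvec (1,1)) x y z)"

definition "Xs = {(0::nat,1::nat),(1,0),(1,1)}"
definition "Ys = {(0::nat,0::nat),(0,1),(1,0),(1,1)}"
definition "Zs = {(0::nat,0::nat),(0,1),(1,0),(1,1)}"

lemma T2_supp: "T_BCLRS 2 x y z \<noteq> 0 \<Longrightarrow> x \<in> Xs \<and> y \<in> Ys \<and> z \<in> Zs"
proof -
  assume a: "T_BCLRS 2 x y z \<noteq> 0"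
  obtain x1 x2 y1 y2 z1 z2 where xyz: "x = (x1,x2)" "y = (y1,y2)" "z = (z1,z2)" by (cases x, cases y, cases z) auto
  have "x1 < 2 \<and> x2 < 2 \<and> y1 = x2 \<and> y2 < 2 \<and> z1 = y2 \<and> z2 = x1 \<and> (x1,x2) \<noteq> (0,0)"
    using a unfolding xyz T_val[OF one_le_numeral] by (auto split: if_splits)
  then show ?thesis unfolding xyz Xs_def Ys_def Zs_def by (auto simp: less_Suc_eq eval_nat_numeral)
qed

lemma Rr_supp: "Rr x y z \<noteq> 0 \<Longrightarrow> x \<in> Xs \<and> y \<in> Ys \<and> z \<in> Zs"
  unfolding Rr_def tprod_def bvec_def Xs_def Ys_def Zs_def by (auto split: if_splits)

lemma Sup5_supp: "Sup5 e x y z \<noteq> 0 \<Longrightarrow> x \<in> Xs \<and> y \<in> Ys \<and> z \<in> Zs"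
proof -
  assume a: "Sup5 e x y z \<noteq> 0"
  have A: "x \<notin> Xs \<Longrightarrow> vA e x = 0 \<and> vB e x = 0 \<and> vC e x = 0 \<and> vD e x = 0 \<and> vE e x = 0"
    unfolding Xs_def vA_def vB_def vC_def vD_def vE_def bvec_def by auto
  have B: "y \<notin> Ys \<Longrightarrow> bvec (1::nat,0::nat) y = 0 \<and> bvec (1::nat,1::nat) y = 0 \<and> bvec (0::nat,0::nat) y = 0 \<and> bvec (0::nat,1::nat) y = 0 \<and> yB y = 0"
    unfolding Ys_def yB_def bvec_def by auto
  have C: "z \<notin> Zs \<Longrightarrow> bvec (1::nat,0::nat) z = 0 \<and> bvec (1::nat,1::nat) z = 0 \<and> bvec (0::nat,0::nat) z = 0 \<and> bvec (0::nat,1::nat) z = 0 \<and> xC z = 0"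
    unfolding Zs_def xC_def bvec_def by auto
  show ?thesis
  proof (intro conjI)
    show "x \<in> Xs" using a A unfolding Sup5_def tprod_def by (cases "x \<in> Xs") auto
    show "y \<in> Ys" using a B unfolding Sup5_def tprod_def by (cases "y \<in> Ys") auto
    show "z \<in> Zs" using a C unfolding Sup5_def tprod_def by (cases "z \<in> Zs") auto
  qed
qed

lemma Sup5_eq: assumes "e \<noteq> 0" shows "Sup5 e x y z = T_BCLRS 2 x y z + e * Rr x y z"
proof (cases "x \<in> Xs \<and> y \<in> Ys \<and> z \<in> Zs")
  case True
  have "\<forall>x\<in>Xs. \<forall>y\<in>Ys. \<forall>z\<in>Zs. Sup5 e x y z = T_BCLRS 2 x y z + e * Rr x y z"
    using assms unfolding Xs_def Ys_def Zs_def
    by (simp add: Sup5_def Rr_def T_val tprod_def vA_def vB_def vC_def vD_def vE_def xC_def yB_def bvec_def field_simps)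
  then show ?thesis using True by blast
next
  case False
  then have "T_BCLRS 2 x y z = 0" "Rr x y z = 0" "Sup5 e x y z = 0"
    using T2_supp[of x y z] Rr_supp[of x y z] Sup5_supp[of e x y z] by blast+
  then show ?thesis by simp
qed


lemma tprod_zero: assumes "a = (\<lambda>_. 0) \<or> b = (\<lambda>_. 0) \<or> c = (\<lambda>_. 0)"
  shows "tprod a b c = (\<lambda>x y z. 0)"
  using assms by (auto simp: tprod_def fun_eq_iff)

lemma srl_mono: "sum_rank_le XA XB XC r T \<Longrightarrow> r \<le> r' \<Longrightarrow> sum_rank_le XA XB XC r' T"
  unfolding sum_rank_le_def by (blast intro: le_trans)

lemma srl_zero: "sum_rank_le XA XB XC r (\<lambda>x y z. 0)"
  unfolding sum_rank_le_def by (rule exI[of _ 0]) auto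

lemma srl_add:
  assumes sa: "supported_in XA a" and sb: "supported_in XB b" and sc: "supported_in XC c"
    and T: "sum_rank_le XA XB XC r T"
  shows "sum_rank_le XA XB XC (Suc r) (\<lambda>x y z. T x y z + tprod a b c x y z)"
proof (cases "a = (\<lambda>_. 0) \<or> b = (\<lambda>_. 0) \<or> c = (\<lambda>_. 0)")
  case True
  then have "(\<lambda>x y z. T x y z + tprod a b c x y z) = T" by (simp add: tprod_zero)
  then show ?thesis using srl_mono[OF T] by simp
next
  case False
  from T obtain k ts where k: "k \<le> r" and ts: "\<forall>i<k. rank_one XA XB XC (ts i)"
    and Teq: "T = (\<lambda>x y z. \<Sum>i<k. ts i x y z)" unfolding sum_rank_le_def by blast
  define ts' where "ts' = ts(k := tprod a b c)"
  have r1: "rank_one XA XB XC (tprod a b c)" using False sa sb sc unfolding rank_one_def by blast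
  have "\<forall>i<Suc k. rank_one XA XB XC (ts' i)" using ts r1 by (auto simp: ts'_def less_Suc_eq)
  moreover have "(\<lambda>x y z. T x y z + tprod a b c x y z) = (\<lambda>x y z. \<Sum>i<Suc k. ts' i x y z)"
    unfolding Teq ts'_def by (auto simp: fun_eq_iff intro!: sum.cong)
  ultimately show ?thesis unfolding sum_rank_le_def using k by (intro exI[of _ "Suc k"]) auto
qed

lemma srl_one:
  assumes "supported_in XA a" "supported_in XB b" "supported_in XC c"
  shows "sum_rank_le XA XB XC (Suc 0) (tprod a b c)"
  using srl_add[OF assms srl_zero[of XA XB XC 0]] by simp

lemma srl_add':
  assumes "supported_in XA a" "supported_in XB b" "supported_in XC c"
    and "sum_rank_le XA XB XC r T" and "r' = Suc r"
  shows "sum_rank_le XA XB XC r' (\<lambda>x y z. T x y z + tprod a b c x y z)"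
  using srl_add assms by blast

lemma Sup_rank: assumes "e \<noteq> 0" shows "sum_rank_le (IA 2) IB (IC 2) 5 (Sup5 e)"
proof -
  have s: "supported_in (IA 2) (vA e)" "supported_in (IA 2) (vB e)" "supported_in (IA 2) (vC e)"
    "supported_in (IA 2) (vD e)" "supported_in (IA 2) (vE e)"
    "supported_in IB (bvec (1,0))" "supported_in IB (bvec (1,1))" "supported_in IB yB"
    "supported_in IB (\<lambda>q. yB q + e * bvec (0,0) q)" "supported_in IB (\<lambda>q. yB q - e * bvec (0,1) q)"
    "supported_in (IC 2) (\<lambda>q. xC q + e * bvec (0,0) q)" "supported_in (IC 2) (\<lambda>q. xC q + e * bvec (1,0) q)"
    "supported_in (IC 2) (bvec (0,1))" "supported_in (IC 2) (\<lambda>q. - bvec (1,1) q)" "supported_in (IC 2) xC"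
    unfolding supported_in_def IA_def IB_def IC_def vA_def vB_def vC_def vD_def vE_def xC_def yB_def bvec_def
    by auto
  show ?thesis unfolding Sup5_def
    by (rule srl_add'[OF s(5,8,15)], rule srl_add'[OF s(4,10,14)], rule srl_add'[OF s(3,9,13)],
        rule srl_add'[OF s(2,7,12)], rule srl_one[OF s(1,6,11)], simp_all)
qed



type_synonym ten = "(nat \<times> nat) \<Rightarrow> (nat \<times> nat) \<Rightarrow> (nat \<times> nat) \<Rightarrow> complex"

definition Pm :: "nat \<Rightarrow> ten \<Rightarrow> nat \<times> nat \<Rightarrow> nat \<times> nat \<Rightarrow> complex" where
  "Pm s S a c = (if s = 0 then S a (1,1) c else if s = 1 then S a (0,1) c + S a (1,0) c else S a (0,0) c)"

definition fs :: "nat \<Rightarrow> nat" where "fs p = (if p = 2 then 1 else 0)"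
definition su :: "nat \<Rightarrow> nat" where "su p = (if p = 0 then 1 else 2)"

definition Kz :: "ten \<Rightarrow> nat \<Rightarrow> nat \<times> nat \<Rightarrow> nat \<Rightarrow> nat \<times> nat \<Rightarrow> complex" where
  "Kz S p c q a = (if q = su p then Pm (fs p) S a c else 0) - (if q = fs p then Pm (su p) S a c else 0)"

definition lc :: "nat \<Rightarrow> nat \<Rightarrow> nat \<Rightarrow> nat \<Rightarrow> complex" where
  "lc q j p k = (if q = 0 \<and> j = 0 then (if p = 1 \<and> k = 0 then -1 else 0)
     else if q = 0 \<and> j = 1 then (if p = 0 \<and> k = 0 then -1 else 0)
     else if q = 1 \<and> j = 0 then (if p = 1 \<and> k = 1 then 1 else if p = 2 \<and> k = 0 then -1 else 0)
     else if q = 1 \<and> j = 1 then (if p = 0 \<and> k = 1 then 1 else if p = 1 \<and> k = 0 then -1 else 0)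
     else if q = 2 \<and> j = 0 then (if p = 2 \<and> k = 1 then 1 else 0)
     else if q = 2 \<and> j = 1 then (if p = 1 \<and> k = 1 then 1 else 0)
     else 0)"

definition Q :: "ten \<Rightarrow> nat \<times> nat \<times> nat \<Rightarrow> nat \<times> nat \<times> nat \<Rightarrow> complex" where
  "Q S r c = (\<Sum>p<3. \<Sum>k<2. lc (fst r) (snd (snd r)) p k * Kz S p (k, fst (snd r)) (fst c) (snd c))"

definition pv :: "nat \<Rightarrow> nat \<Rightarrow> nat \<Rightarrow> complex" where
  "pv s j k = (if s = 0 then (if j = 1 \<and> k = 1 then 1 else 0)
     else if s = 1 then (if (j = 0 \<and> k = 1) \<or> (j = 1 \<and> k = 0) then 1 else 0)
     else (if j = 0 \<and> k = 0 then 1 else 0))"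

lemma Pm_T: assumes "m \<ge> 1"
  shows "Pm s (T_BCLRS m) (i,j) (k,i') = (if i' = i \<and> i < m \<and> j < 2 \<and> k < 2 \<and> (i,j) \<noteq> (0,0) then pv s j k else 0)"
  unfolding Pm_def T_val[OF assms] pv_def by auto

lemma finite_check: "\<forall>q'<3. \<forall>j'<2. \<forall>q<3. \<forall>j<2.
   (\<Sum>p<3. \<Sum>k<2. lc q' j' p k * ((if q = su p then pv (fs p) j k else 0) - (if q = fs p then pv (su p) j k else 0)))
   = (if q' = q \<and> j' = j then 1 else 0)"
  by (simp add: eval_nat_numeral All_less_Suc lessThan_Suc lc_def pv_def fs_def su_def)

lemma Q_simp: "Q S (q',i',j') (q,i,j) = (\<Sum>p<3. \<Sum>k<2. lc q' j' p k * Kz S p (k,i') q (i,j))"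
  by (simp add: Q_def)

lemma QT_gen:
  assumes m: "m \<ge> 1" and r: "q' < 3" "j' < 2" "i' < m" "(i',j') \<noteq> (0,0)"
    and c: "q < 3" "j < 2" "i < m" "(i,j) \<noteq> (0,0)"
  shows "Q (T_BCLRS m) (q',i',j') (q,i,j) = (if q' = q \<and> i' = i \<and> j' = j then 1 else 0)"
proof (cases "i' = i")
  case True
  have "Q (T_BCLRS m) (q',i',j') (q,i,j) = (\<Sum>p<3. \<Sum>k<2. lc q' j' p k * ((if q = su p then pv (fs p) j k else 0) - (if q = fs p then pv (su p) j k else 0)))"
    unfolding Q_simp Kz_def Pm_T[OF m] using True c by (intro sum.cong refl) auto
  then show ?thesis using finite_check r c True by simp
next
  case False
  have "i \<noteq> i'" using False by simp
  then show ?thesis using False unfolding Q_simp Kz_def Pm_T[OF m] by (auto intro!: sum.neutral)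
qed



definition Xm :: "(nat \<Rightarrow> complex) \<Rightarrow> nat \<Rightarrow> nat \<Rightarrow> complex" where
  "Xm \<beta> p q = (if q = su p then \<beta> (fs p) else 0) - (if q = fs p then \<beta> (su p) else 0)"

lemma UV: "\<exists>U V. \<forall>p<3. \<forall>q. Xm \<beta> p q = (\<Sum>e<(2::nat). U p e * V e q)"
proof -
  have p3: "\<And>p::nat. p < 3 \<Longrightarrow> p = 0 \<or> p = 1 \<or> p = 2" by auto
  consider "\<beta> 0 \<noteq> 0" | "\<beta> 0 = 0" "\<beta> 1 \<noteq> 0" | "\<beta> 0 = 0" "\<beta> 1 = 0" "\<beta> 2 \<noteq> 0"
    | "\<beta> 0 = 0" "\<beta> 1 = 0" "\<beta> 2 = 0" by blast
  then show ?thesis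
  proof cases
    case 1
    let ?U = "\<lambda>p e. if p = 0 then (if e = 0 then 1 else 0) else if p = 1 then (if e = 1 then 1 else 0)
                   else (if e = 0 then - \<beta> 2 / \<beta> 0 else \<beta> 1 / \<beta> 0)"
    let ?V = "\<lambda>e q. Xm \<beta> e q"
    have h: "\<forall>p<3. \<forall>q. Xm \<beta> p q = (\<Sum>e<(2::nat). ?U p e * ?V e q)"
      using 1 by (auto dest!: p3 simp: eval_nat_numeral lessThan_Suc Xm_def fs_def su_def field_simps)
    show ?thesis by (rule exI[where x="?U"], rule exI[where x="?V"], rule h)
  next
    case 2
    let ?U = "\<lambda>p e. if p = 0 then (if e = 0 then 1 else 0) else if p = 2 then (if e = 1 then 1 else 0)
                   else (if e = 0 then \<beta> 2 / \<beta> 1 else \<beta> 0 / \<beta> 1)"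
    let ?V = "\<lambda>e q. Xm \<beta> (if e = 0 then 0 else 2) q"
    have h: "\<forall>p<3. \<forall>q. Xm \<beta> p q = (\<Sum>e<(2::nat). ?U p e * ?V e q)"
      using 2 by (auto dest!: p3 simp: eval_nat_numeral lessThan_Suc Xm_def fs_def su_def field_simps)
    show ?thesis by (rule exI[where x="?U"], rule exI[where x="?V"], rule h)
  next
    case 3
    let ?U = "\<lambda>p e. if p = 1 then (if e = 0 then 1 else 0) else if p = 2 then (if e = 1 then 1 else 0)
                   else (if e = 0 then \<beta> 1 / \<beta> 2 else - \<beta> 0 / \<beta> 2)"
    let ?V = "\<lambda>e q. Xm \<beta> (e + 1) q"
    have h: "\<forall>p<3. \<forall>q. Xm \<beta> p q = (\<Sum>e<(2::nat). ?U p e * ?V e q)"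
      using 3 by (auto dest!: p3 simp: eval_nat_numeral lessThan_Suc Xm_def fs_def su_def field_simps)
    show ?thesis by (rule exI[where x="?U"], rule exI[where x="?V"], rule h)
  next
    case 4
    have h: "\<forall>p<3. \<forall>q. Xm \<beta> p q = (\<Sum>e<(2::nat). (\<lambda>p e. 0) p e * (\<lambda>e q. 0) e q)"
      using 4 by (auto dest!: p3 simp: Xm_def fs_def su_def)
    show ?thesis by (rule exI[where x="\<lambda>p e. 0"], rule exI[where x="\<lambda>e q. 0"], rule h)
  qed
qed

definition bt :: "(nat \<times> nat \<Rightarrow> complex) \<Rightarrow> nat \<Rightarrow> complex" where
  "bt b s = (if s = 0 then b (1,1) else if s = 1 then b (0,1) + b (1,0) else b (0,0))"

lemma Kz_tprod: "Kz (tprod a b c) p z q x = Xm (bt b) p q * a x * c z"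
  unfolding Kz_def Pm_def tprod_def Xm_def bt_def by (auto simp: algebra_simps)

lemma Q_tprod:
  assumes UV: "\<forall>p<3. \<forall>q. Xm (bt b) p q = (\<Sum>e<(2::nat). U p e * V e q)"
  shows "Q (tprod a b c) r cl = (\<Sum>e<(2::nat). (\<Sum>p<3. \<Sum>k<2. lc (fst r) (snd (snd r)) p k * c (k, fst (snd r)) * U p e)
            * (V e (fst cl) * a (snd cl)))"
proof -
  have "Q (tprod a b c) r cl = (\<Sum>p<3. \<Sum>k<2. lc (fst r) (snd (snd r)) p k *
      ((\<Sum>e<(2::nat). U p e * V e (fst cl)) * a (snd cl) * c (k, fst (snd r))))"
    unfolding Q_def Kz_tprod using UV by (intro sum.cong refl) auto
  also have "\<dots> = (\<Sum>e<(2::nat). (\<Sum>p<3. \<Sum>k<2. lc (fst r) (snd (snd r)) p k * c (k, fst (snd r)) * U p e)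
            * (V e (fst cl) * a (snd cl)))"
    by (simp add: eval_nat_numeral lessThan_Suc algebra_simps)
  finally show ?thesis .
qed

lemma Pm_sum: "Pm s (\<lambda>x y z. \<Sum>i<k. ts i x y z) a c = (\<Sum>i<k. Pm s (ts i) a c)"
  unfolding Pm_def by (simp add: sum.distrib)

lemma Kz_sum: "Kz (\<lambda>x y z. \<Sum>i<k. ts i x y z) p z q x = (\<Sum>i<k. Kz (ts i) p z q x)"
  unfolding Kz_def Pm_sum by (simp add: sum_subtractf)

lemma Q_sum: "Q (\<lambda>x y z. \<Sum>i<k. ts i x y z) r c = (\<Sum>i<k. Q (ts i) r c)"
  unfolding Q_def Kz_sum by (simp add: eval_nat_numeral lessThan_Suc sum_distrib_left sum.distrib)

lemma reindex2: fixes f :: "nat \<Rightarrow> nat \<Rightarrow> complex" shows "(\<Sum>i<k. \<Sum>e<(2::nat). f i e) = (\<Sum>h<2*k. f (h div 2) (h mod 2))"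
proof (induct k)
  case 0 then show ?case by simp
next
  case (Suc k)
  have e: "2 * Suc k = Suc (Suc (2*k))" by simp
  have d: "(2*k) div 2 = k" "(2*k) mod 2 = 0" "Suc (2*k) div 2 = k" "Suc (2*k) mod 2 = 1" by presburger+
  have "(\<Sum>h<2*Suc k. f (h div 2) (h mod 2)) = (\<Sum>h<2*k. f (h div 2) (h mod 2)) + f k 0 + f k 1"
    unfolding e sum.lessThan_Suc d by simp
  moreover have "(\<Sum>e<(2::nat). f k e) = f k 0 + f k 1" by (simp add: eval_nat_numeral)
  ultimately show ?case using Suc by (simp add: add.assoc)
qed

lemma det_lowrank:
  fixes F G :: "nat \<Rightarrow> nat \<Rightarrow> complex"
  assumes K: "K < N" and M: "\<And>r c. r < N \<Longrightarrow> c < N \<Longrightarrow> M r c = (\<Sum>h<K. F h r * G h c)"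
  shows "det (mat N N (\<lambda>(r,c). M r c)) = 0"
proof -
  define A where "A = mat N N (\<lambda>(r,h). if h < K then F h r else 0)"
  define B where "B = mat N N (\<lambda>(h,c). if h < K then G h c else 0)"
  have AB: "mat N N (\<lambda>(r,c). M r c) = A * B"
  proof (rule eq_matI)
    fix r c assume rc: "r < dim_row (A * B)" "c < dim_col (A * B)"
    then have r: "r < N" and c: "c < N" by (auto simp: A_def B_def)
    have "(A * B) $$ (r,c) = (\<Sum>h\<in>{0..<N}. (if h < K then F h r else 0) * (if h < K then G h c else 0))"
      using r c by (simp add: A_def B_def scalar_prod_def)
    also have "\<dots> = (\<Sum>h\<in>{0..<N}. if h < K then F h r * G h c else 0)"
      by (intro sum.cong) auto
    also have "\<dots> = (\<Sum>h\<in>{0..<N} \<inter> {h. h < K}. F h r * G h c)"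
      by (simp add: sum.inter_restrict)
    also have "{0..<N} \<inter> {h. h < K} = {..<K}" using K by auto
    finally show "mat N N (\<lambda>(r,c). M r c) $$ (r,c) = (A * B) $$ (r,c)" using r c M by simp
  qed (auto simp: A_def B_def)
  have Ac: "A \<in> carrier_mat N N" and Bc: "B \<in> carrier_mat N N" by (auto simp: A_def B_def)
  have "det A = 0"
  proof -
    have "det A = (\<Sum>p\<in>{p. p permutes {0..<N}}. signof p * (\<Prod>i = 0 ..< N. A $$ (p i, i)))"
      using mat_det_left_def[OF Ac] Ac by simp
    also have "\<dots> = 0"
    proof (intro sum.neutral ballI)
      fix p assume p: "p \<in> {p. p permutes {0..<N}}"
      have "N - 1 \<in> {0..<N}" using K by auto
      moreover have "p (N - 1) < N" using p K by (auto simp: permutes_in_image)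
      moreover then have "A $$ (p (N - 1), N - 1) = 0" using K by (simp add: A_def)
      ultimately have "(\<Prod>i = 0 ..< N. A $$ (p i, i)) = 0"
        by (intro prod_zero) auto
      then show "signof p * (\<Prod>i = 0 ..< N. A $$ (p i, i)) = 0" by simp
    qed
    finally show ?thesis .
  qed
  then show ?thesis unfolding AB det_mult[OF Ac Bc] by simp
qed



definition idx :: "nat \<Rightarrow> nat \<times> nat \<times> nat" where
  "idx r = ((r+3) mod 3, (r+3) div 3 div 2, (r+3) div 3 mod 2)"

lemma idx_props:
  assumes "m \<ge> 1" "r < 6*m - 3"
  shows "fst (idx r) < 3" "snd (snd (idx r)) < 2" "fst (snd (idx r)) < m"
    "(fst (snd (idx r)), snd (snd (idx r))) \<noteq> (0,0)"
proof -
  let ?t = "(r+3) div 3"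
  have "r + 3 < (2*m) * 3" using assms by linarith
  then have t: "?t < 2*m" by (rule less_mult_imp_div_less)
  have t1: "?t \<ge> 1" by simp
  show "fst (idx r) < 3" "snd (snd (idx r)) < 2" unfolding idx_def by auto
  show "fst (snd (idx r)) < m" unfolding idx_def using t by (simp add: less_mult_imp_div_less mult.commute)
  show "(fst (snd (idx r)), snd (snd (idx r))) \<noteq> (0,0)"
  proof
    assume "(fst (snd (idx r)), snd (snd (idx r))) = (0,0)"
    then have "?t div 2 = 0" "?t mod 2 = 0" unfolding idx_def by auto
    then have "?t = 0" using div_mult_mod_eq[of ?t 2] by simp
    then show False using t1 by linarith
  qed
qed

lemma idx_inj: assumes "idx r = idx c" shows "r = c"
proof -
  let ?a = "(r+3) div 3" and ?b = "(c+3) div 3"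
  have 1: "?a div 2 = ?b div 2" "?a mod 2 = ?b mod 2" "(r+3) mod 3 = (c+3) mod 3" using assms by (auto simp: idx_def)
  have "?a = ?a div 2 * 2 + ?a mod 2" by (rule div_mult_mod_eq[symmetric])
  also have "\<dots> = ?b div 2 * 2 + ?b mod 2" using 1 by simp
  also have "\<dots> = ?b" by (rule div_mult_mod_eq)
  finally have ab: "?a = ?b" .
  have "r + 3 = (r+3) div 3 * 3 + (r+3) mod 3" by (rule div_mult_mod_eq[symmetric])
  also have "\<dots> = (c+3) div 3 * 3 + (c+3) mod 3" using 1 ab by simp
  also have "\<dots> = c + 3" by (rule div_mult_mod_eq)
  finally have "r + 3 = c + 3" .
  then show ?thesis by simp
qed

definition Dt :: "nat \<Rightarrow> ten \<Rightarrow> complex" where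
  "Dt m S = det (mat (6*m-3) (6*m-3) (\<lambda>(r,c). Q S (idx r) (idx c)))"

lemma QT: assumes m: "m \<ge> 1" and r: "r < 6*m-3" and c: "c < 6*m-3"
  shows "Q (T_BCLRS m) (idx r) (idx c) = (if r = c then 1 else 0)"
proof -
  obtain q' i' j' where ir: "idx r = (q',i',j')" by (cases "idx r") auto
  obtain q i j where ic: "idx c = (q,i,j)" by (cases "idx c") auto
  have pr: "q' < 3" "j' < 2" "i' < m" "(i',j') \<noteq> (0,0)" using idx_props[OF m r] ir by auto
  have pc: "q < 3" "j < 2" "i < m" "(i,j) \<noteq> (0,0)" using idx_props[OF m c] ic by auto
  have "(r = c) = (q' = q \<and> i' = i \<and> j' = j)" using idx_inj[of r c] ir ic by auto
  then show ?thesis unfolding ir ic using QT_gen[OF m pr pc] by simp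
qed

lemma Dt_T: assumes "m \<ge> 1" shows "Dt m (T_BCLRS m) = 1"
proof -
  have "mat (6*m-3) (6*m-3) (\<lambda>(r,c). Q (T_BCLRS m) (idx r) (idx c)) = 1\<^sub>m (6*m-3)"
    by (rule eq_matI) (auto simp: QT[OF assms])
  then show ?thesis unfolding Dt_def by simp
qed

lemma Dt_low:
  assumes K: "2*k < 6*m - 3"
  shows "Dt m (\<lambda>x y z. \<Sum>i<k. tprod (fa i) (fb i) (fc i) x y z) = 0"
proof -
  have "\<forall>i. \<exists>U V. \<forall>p<3. \<forall>q. Xm (bt (fb i)) p q = (\<Sum>e<(2::nat). U p e * V e q)"
    using UV by blast
  then obtain U V where UV: "\<And>i. \<forall>p<3. \<forall>q. Xm (bt (fb i)) p q = (\<Sum>e<(2::nat). U i p e * V i e q)"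
    by metis
  define F where "F = (\<lambda>i e r. (\<Sum>p<3. \<Sum>k<2. lc (fst r) (snd (snd r)) p k * fc i (k, fst (snd r)) * U i p e))"
  define G where "G = (\<lambda>i e cl. V i e (fst cl) * fa i (snd cl))"
  have "\<And>r c. Q (\<lambda>x y z. \<Sum>i<k. tprod (fa i) (fb i) (fc i) x y z) (idx r) (idx c)
      = (\<Sum>h<2*k. F (h div 2) (h mod 2) (idx r) * G (h div 2) (h mod 2) (idx c))"
  proof -
    fix r c
    have "Q (\<lambda>x y z. \<Sum>i<k. tprod (fa i) (fb i) (fc i) x y z) (idx r) (idx c)
        = (\<Sum>i<k. Q (tprod (fa i) (fb i) (fc i)) (idx r) (idx c))" by (rule Q_sum)
    also have "\<dots> = (\<Sum>i<k. \<Sum>e<(2::nat). F i e (idx r) * G i e (idx c))"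
      unfolding F_def G_def by (intro sum.cong refl Q_tprod UV)
    also have "\<dots> = (\<Sum>h<2*k. F (h div 2) (h mod 2) (idx r) * G (h div 2) (h mod 2) (idx c))"
      by (rule reindex2)
    finally show "?thesis r c" .
  qed
  then show ?thesis unfolding Dt_def
    by (intro det_lowrank[OF K, of _ "\<lambda>h r. F (h div 2) (h mod 2) (idx r)" "\<lambda>h c. G (h div 2) (h mod 2) (idx c)"]) simp
qed

lemma Pm_tendsto: assumes "\<And>x y z. (\<lambda>n. S n x y z) \<longlonglongrightarrow> T x y z"
  shows "(\<lambda>n. Pm s (S n) a c) \<longlonglongrightarrow> Pm s T a c"
  unfolding Pm_def by (cases "s = 0"; cases "s = 1") (auto intro!: tendsto_add assms)

lemma Kz_tendsto: assumes "\<And>x y z. (\<lambda>n. S n x y z) \<longlonglongrightarrow> T x y z"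
  shows "(\<lambda>n. Kz (S n) p z q x) \<longlonglongrightarrow> Kz T p z q x"
  unfolding Kz_def by (cases "q = su p"; cases "q = fs p") (auto intro!: tendsto_diff tendsto_minus Pm_tendsto assms)

lemma Q_tendsto: assumes "\<And>x y z. (\<lambda>n. S n x y z) \<longlonglongrightarrow> T x y z"
  shows "(\<lambda>n. Q (S n) r c) \<longlonglongrightarrow> Q T r c"
  unfolding Q_def by (intro tendsto_sum tendsto_mult_left Kz_tendsto assms)

lemma Dt_sum: "Dt m S = (\<Sum>p\<in>{p. p permutes {0..<6*m-3}}. signof p * (\<Prod>i=0..<6*m-3. Q S (idx i) (idx (p i))))"
proof -
  let ?N = "6*m-3"
  have "Dt m S = (\<Sum>p\<in>{p. p permutes {0..<?N}}. signof p * (\<Prod>i=0..<?N. mat ?N ?N (\<lambda>(r,c). Q S (idx r) (idx c)) $$ (i, p i)))"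
    unfolding Dt_def by (rule det_def') simp
  also have "\<dots> = (\<Sum>p\<in>{p. p permutes {0..<?N}}. signof p * (\<Prod>i=0..<?N. Q S (idx i) (idx (p i))))"
  proof (intro sum.cong refl arg_cong2[where f="(*)"] prod.cong)
    fix p i assume p: "p \<in> {p. p permutes {0..<?N}}" and i: "i \<in> {0..<?N}"
    have "p i < ?N" using p i by (auto simp: permutes_in_image)
    then show "mat ?N ?N (\<lambda>(r,c). Q S (idx r) (idx c)) $$ (i, p i) = Q S (idx i) (idx (p i))"
      using i by simp
  qed
  finally show ?thesis .
qed

lemma Dt_tendsto: assumes "\<And>x y z. (\<lambda>n. S n x y z) \<longlonglongrightarrow> T x y z"
  shows "(\<lambda>n. Dt m (S n)) \<longlonglongrightarrow> Dt m T"
  unfolding Dt_sum by (intro tendsto_sum tendsto_mult_left tendsto_prod Q_tendsto assms)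

lemma lower:
  assumes m: "m \<ge> 1" and r: "2*r < 6*m - 3"
    and S: "\<forall>n. sum_rank_le (IA m) IB (IC m) r (S n)"
    and lim: "\<forall>x y z. (\<lambda>n. S n x y z) \<longlonglongrightarrow> T_BCLRS m x y z"
  shows False
proof -
  have z: "Dt m (S n) = 0" for n
  proof -
    from S obtain k ts where k: "k \<le> r" and ts: "\<forall>i<k. rank_one (IA m) IB (IC m) (ts i)"
      and Seq: "S n = (\<lambda>x y z. \<Sum>i<k. ts i x y z)" unfolding sum_rank_le_def by blast
    have "\<forall>i. \<exists>abc. i < k \<longrightarrow> ts i = tprod (fst abc) (fst (snd abc)) (snd (snd abc))"
      using ts unfolding rank_one_def by fastforce
    then obtain g where g: "\<And>i. i < k \<Longrightarrow> ts i = tprod (fst (g i)) (fst (snd (g i))) (snd (snd (g i)))"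
      by metis
    have "S n = (\<lambda>x y z. \<Sum>i<k. tprod (fst (g i)) (fst (snd (g i))) (snd (snd (g i))) x y z)"
      unfolding Seq by (intro ext sum.cong refl) (simp add: g)
    moreover have "2*k < 6*m - 3" using k r by linarith
    ultimately show ?thesis using Dt_low by simp
  qed
  have "(\<lambda>n. Dt m (S n)) \<longlonglongrightarrow> Dt m (T_BCLRS m)" using lim by (intro Dt_tendsto) auto
  then have "(\<lambda>n. 0::complex) \<longlonglongrightarrow> 1" using z Dt_T[OF m] by simp
  then show False using LIMSEQ_unique[OF tendsto_const] by fastforce
qed



lemma srl_finite:
  assumes "finite F" "F \<subseteq> XA \<times> XB \<times> XC"
  shows "sum_rank_le XA XB XC (card F)
     (\<lambda>x y z. \<Sum>w\<in>F. g w * bvec (fst w) x * bvec (fst (snd w)) y * bvec (snd (snd w)) z)"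
  using assms
proof (induction F rule: finite_induct)
  case empty
  then show ?case using srl_zero[of XA XB XC 0] by simp
next
  case (insert w F)
  have s: "supported_in XA (\<lambda>q. g w * bvec (fst w) q)" "supported_in XB (bvec (fst (snd w)))"
    "supported_in XC (bvec (snd (snd w)))"
    using insert.prems unfolding supported_in_def bvec_def by auto
  have IH: "sum_rank_le XA XB XC (card F)
     (\<lambda>x y z. \<Sum>w\<in>F. g w * bvec (fst w) x * bvec (fst (snd w)) y * bvec (snd (snd w)) z)"
    using insert by auto
  have eq: "(\<lambda>x y z. \<Sum>w\<in>insert w F. g w * bvec (fst w) x * bvec (fst (snd w)) y * bvec (snd (snd w)) z)
    = (\<lambda>x y z. (\<Sum>w\<in>F. g w * bvec (fst w) x * bvec (fst (snd w)) y * bvec (snd (snd w)) z)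
        + tprod (\<lambda>q. g w * bvec (fst w) q) (bvec (fst (snd w))) (bvec (snd (snd w))) x y z)"
    using insert.hyps by (simp add: tprod_def algebra_simps)
  show ?case unfolding eq using srl_add[OF s IH] insert.hyps by simp
qed

lemma T_supp: assumes "m \<ge> 1" "T_BCLRS m x y z \<noteq> 0" shows "(x,y,z) \<in> IA m \<times> IB \<times> IC m"
proof -
  obtain x1 x2 y1 y2 z1 z2 where xyz: "x = (x1,x2)" "y = (y1,y2)" "z = (z1,z2)" by (cases x, cases y, cases z) auto
  have "x1 < m \<and> x2 < 2 \<and> y1 = x2 \<and> y2 < 2 \<and> z1 = y2 \<and> z2 = x1 \<and> (x1,x2) \<noteq> (0,0)"
    using assms unfolding xyz T_val[OF assms(1)] by (auto split: if_splits)
  then show ?thesis unfolding xyz IA_def IB_def IC_def by auto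
qed

lemma T_exists: assumes m: "m \<ge> 1"
  shows "\<exists>r. \<exists>S. (\<forall>n. sum_rank_le (IA m) IB (IC m) r (S n)) \<and> (\<forall>x y z. (\<lambda>n. S n x y z) \<longlonglongrightarrow> T_BCLRS m x y z)"
proof -
  let ?F = "IA m \<times> IB \<times> IC m"
  have fin: "finite ?F"
  proof -
    have "IA m \<subseteq> {..<m} \<times> {..<2}" "IB \<subseteq> {..<2} \<times> {..<2}" "IC m \<subseteq> {..<2} \<times> {..<m}"
      unfolding IA_def IB_def IC_def by auto
    then have "finite (IA m)" "finite IB" "finite (IC m)" by (auto intro: finite_subset)
    then show ?thesis by simp
  qed
  let ?g = "\<lambda>w. T_BCLRS m (fst w) (fst (snd w)) (snd (snd w))"
  have eq: "(\<lambda>x y z. \<Sum>w\<in>?F. ?g w * bvec (fst w) x * bvec (fst (snd w)) y * bvec (snd (snd w)) z) = T_BCLRS m"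
  proof (intro ext)
    fix x y z
    have "(\<Sum>w\<in>?F. ?g w * bvec (fst w) x * bvec (fst (snd w)) y * bvec (snd (snd w)) z)
       = (\<Sum>w\<in>?F. if w = (x,y,z) then T_BCLRS m x y z else 0)"
      by (intro sum.cong refl) (auto simp: bvec_def)
    also have "\<dots> = (if (x,y,z) \<in> ?F then T_BCLRS m x y z else 0)"
      using fin by (simp add: sum.delta)
    also have "\<dots> = T_BCLRS m x y z" using T_supp[OF m, of x y z] by auto
    finally show "(\<Sum>w\<in>?F. ?g w * bvec (fst w) x * bvec (fst (snd w)) y * bvec (snd (snd w)) z) = T_BCLRS m x y z" .
  qed
  have "sum_rank_le (IA m) IB (IC m) (card ?F) (T_BCLRS m)"
    using srl_finite[OF fin subset_refl, of ?g] unfolding eq .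
  then show ?thesis by (intro exI[of _ "card ?F"] exI[of _ "\<lambda>n. T_BCLRS m"]) auto
qed

theorem mainTheorem1:
  shows "border_rank (IA 2) IB (IC 2) (T_BCLRS 2) = 5 \<and>
         (\<forall>m::nat. m > 2 \<longrightarrow> border_rank (IA m) IB (IC m) (T_BCLRS m) \<ge> 3 * m - 2)"
proof
  show "border_rank (IA 2) IB (IC 2) (T_BCLRS 2) = 5"
    unfolding border_rank_def
  proof (rule Least_equality)
    define e where "e = (\<lambda>n. complex_of_real (inverse (real (Suc n))))"
    have e0: "e n \<noteq> 0" for n
    proof -
      have "inverse (real (Suc n)) \<noteq> 0" by simp
      then show ?thesis unfolding e_def of_real_eq_0_iff .
    qed
    have el: "e \<longlonglongrightarrow> 0" unfolding e_def using tendsto_of_real[OF LIMSEQ_inverse_real_of_nat] by (simp only: of_real_0)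
    show "\<exists>S. (\<forall>n. sum_rank_le (IA 2) IB (IC 2) 5 (S n)) \<and> (\<forall>x y z. (\<lambda>n. S n x y z) \<longlonglongrightarrow> T_BCLRS 2 x y z)"
    proof (intro exI[of _ "\<lambda>n. Sup5 (e n)"] conjI allI)
      fix n show "sum_rank_le (IA 2) IB (IC 2) 5 (Sup5 (e n))" using Sup_rank[OF e0] .
    next
      fix x y z
      have "(\<lambda>n. T_BCLRS 2 x y z + e n * Rr x y z) \<longlonglongrightarrow> T_BCLRS 2 x y z + 0 * Rr x y z"
        by (intro tendsto_add tendsto_mult tendsto_const el)
      then show "(\<lambda>n. Sup5 (e n) x y z) \<longlonglongrightarrow> T_BCLRS 2 x y z" using Sup5_eq[OF e0] by simp
    qed
  next
    fix y assume "\<exists>S. (\<forall>n. sum_rank_le (IA 2) IB (IC 2) y (S n)) \<and> (\<forall>x ya z. (\<lambda>n. S n x ya z) \<longlonglongrightarrow> T_BCLRS 2 x ya z)"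
    then obtain S where "\<forall>n. sum_rank_le (IA 2) IB (IC 2) y (S n)" "\<forall>x ya z. (\<lambda>n. S n x ya z) \<longlonglongrightarrow> T_BCLRS 2 x ya z"
      by blast
    then show "5 \<le> y" using lower[of 2 y S] by fastforce
  qed
next
  show "\<forall>m::nat. m > 2 \<longrightarrow> border_rank (IA m) IB (IC m) (T_BCLRS m) \<ge> 3 * m - 2"
  proof (intro allI impI)
    fix m :: nat assume m: "m > 2"
    then have m1: "m \<ge> 1" by simp
    let ?P = "\<lambda>r. \<exists>S. (\<forall>n. sum_rank_le (IA m) IB (IC m) r (S n)) \<and> (\<forall>x y z. (\<lambda>n. S n x y z) \<longlonglongrightarrow> T_BCLRS m x y z)"
    have "?P (LEAST r. ?P r)" using T_exists[OF m1] by (rule LeastI_ex)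
    then obtain S where "\<forall>n. sum_rank_le (IA m) IB (IC m) (LEAST r. ?P r) (S n)"
        "\<forall>x y z. (\<lambda>n. S n x y z) \<longlonglongrightarrow> T_BCLRS m x y z" by blast
    then have "\<not> 2 * (LEAST r. ?P r) < 6*m - 3" using lower[OF m1] by blast
    then have "3 * m - 2 \<le> (LEAST r. ?P r)" using m by arith
    then show "border_rank (IA m) IB (IC m) (T_BCLRS m) \<ge> 3 * m - 2" unfolding border_rank_def .
  qed
qed


end
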